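(* If a set of desirable option sets $K\subseteq\mathscr{Q}$ is coherent, then the choice function $C_K$ is coherent.
   Context: Let $\mathcal{X}$ be a nonempty set and let $\mathscr{V}$ be the real vector space of all functions $u:\mathcal{X}\to\mathbb{R}$ (options), with pointwise operations. For $u,v\in\mathscr{V}$, $u\le v$ iff $u(x)\le v(x)$ for all $x\in\mathcal{X}$, and $u<v$ iff $u\le v$ and $u\neq v$. Let $\mathscr{V}_{>0}=\{u\in\mathscr{V}:0<u\}$ and $\mathscr{V}^s_{>0}=\{\{u\}:u\in\mathscr{V}_{>0}\}$. Let $\mathscr{Q}$ be the set of all finite subsets of $\mathscr{V}$ (including $\emptyset$). For $A\in\mathscr{Q}$ and $u\in\mathscr{V}$, $A-u=\{v-u:v\in A\}$. For a positive integer $n$, $\mathbb{R}^{n,+}=\{\boldsymbol\lambda\in\mathbb{R}^n:\lambda_j\ge0\ \forall j,\ \sum_j\lambda_j>0\}$, and for $\boldsymbol\lambda\in\mathbb{R}^n$, $\mathbf u=(u_1,\dots,u_n)\in\mathscr{V}^n$, $\boldsymbol\lambda\mathbf u=\sum_{j=1}^n\lambda_ju_j$. A choice function is a map $C:\mathscr{Q}\to\mathscr{Q}$ with $C(A)\subseteq A$ for all $A$; its rejection function is $R_C(A)=A\setminus C(A)$, and $K_C=\{A\in\mathscr{Q}:0\notin C(A\cup\{0\})\}$. $C$ is coherent if: (C0) $C(A)\neq\emptyset$ for all nonempty $A\in\mathscr{Q}$; (C1) for all $A\in\mathscr{Q}$ and $u\in A$: $u\in C(A)\iff 0\in C(A-u)$;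 (C2) $\{u\}\in K_C$ for all $u\in\mathscr{V}_{>0}$; (C3) for all $A,B\in K_C$ and all maps $\boldsymbol\lambda:A\times B\to\mathbb{R}^{2,+}$, $\{\boldsymbol\lambda(\mathbf u)\mathbf u:\mathbf u\in A\times B\}\in K_C$; (C4) $A\subseteq B\Rightarrow R_C(A)\subseteq R_C(B)$ for all $A,B\in\mathscr{Q}$. A set of desirable option sets is any $K\subseteq\mathscr{Q}$. It is coherent if for all $A,B\in K$: (K0) $A\setminus\{0\}\in K$; (K1) $\{0\}\notin K$; (K2) $\mathscr{V}^s_{>0}\subseteq K$; (K3) $\{\boldsymbol\lambda(\mathbf u)\mathbf u:\mathbf u\in A\times B\}\in K$ for every map $\boldsymbol\lambda:A\times B\to\mathbb{R}^{2,+}$; (K4) $A\cup Q\in K$ for all $Q\in\mathscr{Q}$. For $K\subseteq\mathscr{Q}$, the choice function $C_K$ is defined by $C_K(A)=\{u\in A:(A-u)\setminus\{0\}\notin K\}$ for all $A\in\mathscr{Q}$. *)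

theory Defs
  imports Complex_Main "HOL-Library.Function_Algebras"
begin

text \<open>Options are real-valued functions on a (nonempty) type 'x, with pointwise
  order and vector operations (from Function_Algebras / Main).
  Option sets in Q are finite sets of options.\<close>

type_synonym 'x opt = "'x \<Rightarrow> real"

definition Qsets :: "'x opt set set" where
  "Qsets = {A. finite A}"

definition Vpos :: "'x opt set" where
  "Vpos = {u. 0 < u}"

definition Vpos_s :: "'x opt set set" where
  "Vpos_s = {{u} | u. u \<in> Vpos}"

definition minus_set :: "'x opt set \<Rightarrow> 'x opt \<Rightarrow> 'x opt set" where
  "minus_set A u = (\<lambda>v. v - u) ` A"

definition R2plus :: "(real \<times> real) set" where
  "R2plus = {(a, b). a \<ge> 0 \<and> b \<ge> 0 \<and> a + b > 0}"

definition posi_comb :: "((real \<times> real)) \<Rightarrow> 'x opt \<times> 'x opt \<Rightarrow> 'x opt" where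
  "posi_comb l p = (\<lambda>x. fst l * fst p x + snd l * snd p x)"

definition comb_set ::
  "('x opt \<times> 'x opt \<Rightarrow> real \<times> real) \<Rightarrow> 'x opt set \<Rightarrow> 'x opt set \<Rightarrow> 'x opt set" where
  "comb_set lam A B = (\<lambda>p. posi_comb (lam p) p) ` (A \<times> B)"

definition is_choice_function :: "('x opt set \<Rightarrow> 'x opt set) \<Rightarrow> bool" where
  "is_choice_function C \<longleftrightarrow> (\<forall>A \<in> Qsets. C A \<in> Qsets \<and> C A \<subseteq> A)"

definition rejection :: "('x opt set \<Rightarrow> 'x opt set) \<Rightarrow> 'x opt set \<Rightarrow> 'x opt set" where
  "rejection C A = A - C A"

definition K_of :: "('x opt set \<Rightarrow> 'x opt set) \<Rightarrow> 'x opt set set" where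
  "K_of C = {A \<in> Qsets. 0 \<notin> C (A \<union> {0})}"

definition coherent_choice :: "('x opt set \<Rightarrow> 'x opt set) \<Rightarrow> bool" where
  "coherent_choice C \<longleftrightarrow>
     is_choice_function C \<and>
     (\<forall>A \<in> Qsets. A \<noteq> {} \<longrightarrow> C A \<noteq> {}) \<and>
     (\<forall>A \<in> Qsets. \<forall>u \<in> A. u \<in> C A \<longleftrightarrow> 0 \<in> C (minus_set A u)) \<and>
     (\<forall>u \<in> Vpos. {u} \<in> K_of C) \<and>
     (\<forall>A \<in> K_of C. \<forall>B \<in> K_of C. \<forall>lam.
        (\<forall>p \<in> A \<times> B. lam p \<in> R2plus) \<longrightarrow> comb_set lam A B \<in> K_of C) \<and>
     (\<forall>A \<in> Qsets. \<forall>B \<in> Qsets. A \<subseteq> B \<longrightarrow> rejection C A \<subseteq> rejection C B)"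

definition coherent_sdos :: "'x opt set set \<Rightarrow> bool" where
  "coherent_sdos K \<longleftrightarrow> K \<subseteq> Qsets \<and>
     (\<forall>A \<in> K. A - {0} \<in> K) \<and>
     {0} \<notin> K \<and>
     Vpos_s \<subseteq> K \<and>
     (\<forall>A \<in> K. \<forall>B \<in> K. \<forall>lam.
        (\<forall>p \<in> A \<times> B. lam p \<in> R2plus) \<longrightarrow> comb_set lam A B \<in> K) \<and>
     (\<forall>A \<in> K. \<forall>Q \<in> Qsets. A \<union> Q \<in> K)"

definition C_of :: "'x opt set set \<Rightarrow> 'x opt set \<Rightarrow> 'x opt set" where
  "C_of K A = {u \<in> A. minus_set A u - {0} \<notin> K}"

end

theory Submission
  imports Defs
begin

lemma ms0: "minus_set A (0::'x opt) = A"
  unfolding minus_set_def by simp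

lemma Kup: assumes "coherent_sdos K" "X \<in> K" "finite Y" "X \<subseteq> Y" shows "Y \<in> K"
proof -
  have "X \<union> Y \<in> K" using assms unfolding coherent_sdos_def Qsets_def by blast
  moreover have "X \<union> Y = Y" using assms(4) by blast
  ultimately show ?thesis by simp
qed

lemma elim:
  fixes K :: "('x \<Rightarrow> real) set set"
  assumes co: "coherent_sdos K" and fA: "finite A"
    and u: "u \<in> A" and w: "w \<in> A" and uw: "u \<noteq> w"
    and Du: "minus_set A u - {0} \<in> K" and Dw: "minus_set A w - {0} \<in> K"
  shows "minus_set (A - {w}) u - {0} \<in> K"
proof -
  define lam where "lam = (\<lambda>p::'x opt \<times> 'x opt. if fst p = w - u then (1::real,1::real) else (1,0))"
  have "\<forall>p \<in> (minus_set A u - {0}) \<times> (minus_set A w - {0}). lam p \<in> R2plus"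
    unfolding lam_def R2plus_def by auto
  then have C: "comb_set lam (minus_set A u - {0}) (minus_set A w - {0}) \<in> K"
    using co Du Dw unfolding coherent_sdos_def by blast
  let ?C = "comb_set lam (minus_set A u - {0}) (minus_set A w - {0})"
  have C0: "?C - {0} \<in> K" using co C unfolding coherent_sdos_def by blast
  have sub: "?C - {0} \<subseteq> minus_set (A - {w}) u - {0}"
  proof
    fix z assume z: "z \<in> ?C - {0}"
    then obtain a b where ab: "a \<in> minus_set A u - {0}" "b \<in> minus_set A w - {0}"
      and zd: "z = posi_comb (lam (a,b)) (a,b)" and z0: "z \<noteq> 0"
      unfolding comb_set_def by auto
    obtain va where va: "va \<in> A" "a = va - u" using ab(1) unfolding minus_set_def by auto
    obtain vb where vb: "vb \<in> A" "b = vb - w" using ab(2) unfolding minus_set_def by auto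
    show "z \<in> minus_set (A - {w}) u - {0}"
    proof (cases "a = w - u")
      case True
      have "z = a + b" using True zd unfolding lam_def posi_comb_def by auto
      hence "z = vb - u" using True vb by (simp add: algebra_simps)
      moreover have "vb \<noteq> w" using ab(2) vb by auto
      ultimately show ?thesis using vb z0 unfolding minus_set_def by auto
    next
      case False
      have "z = a" using False zd unfolding lam_def posi_comb_def by auto
      moreover have "va \<noteq> w" using False va by auto
      ultimately show ?thesis using va z0 unfolding minus_set_def by auto
    qed
  qed
  show ?thesis by (rule Kup[OF co C0 _ sub]) (use fA in \<open>simp add: minus_set_def\<close>)
qed

lemma nonempty_aux:
  fixes K :: "('x \<Rightarrow> real) set set"
  assumes co: "coherent_sdos K"
  shows "finite A \<Longrightarrow> A \<noteq> {} \<Longrightarrow> \<forall>u\<in>A. minus_set A u - {0} \<in> K \<Longrightarrow> False"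
proof (induction A rule: finite_ne_induct)
  case (singleton x)
  have "minus_set {x} x - {0} = {}" unfolding minus_set_def by simp
  moreover have "minus_set {x} x - {0} \<in> K" using singleton.prems by blast
  ultimately have "{} \<in> K" by (simp only:)
  hence "{} \<union> {0} \<in> K" using co unfolding coherent_sdos_def Qsets_def by blast
  thus False using co unfolding coherent_sdos_def by simp
next
  case (insert x F)
  have "\<forall>u\<in>F. minus_set F u - {0} \<in> K"
  proof
    fix u assume u: "u \<in> F"
    have "minus_set (insert x F - {x}) u - {0} \<in> K"
      using elim[OF co _ _ _ _ _ ] insert u by (metis finite_insert insertCI)
    moreover have "insert x F - {x} = F" using insert by auto
    ultimately show "minus_set F u - {0} \<in> K" by simp
  qed
  thus False using insert by blast
qed

lemma KC_eq:
  fixes K :: "('x \<Rightarrow> real) set set"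
  assumes co: "coherent_sdos K"
  shows "K_of (C_of K) = K"
proof -
  have "A \<in> K_of (C_of K) \<longleftrightarrow> A \<in> K" for A
  proof -
    have "A \<in> K_of (C_of K) \<longleftrightarrow> finite A \<and> A - {0} \<in> K"
      unfolding K_of_def C_of_def Qsets_def by (auto simp: ms0)
    also have "\<dots> \<longleftrightarrow> A \<in> K"
    proof
      assume "finite A \<and> A - {0} \<in> K"
      thus "A \<in> K" using Kup[OF co, of "A - {0}" A] by auto
    next
      assume "A \<in> K" thus "finite A \<and> A - {0} \<in> K"
        using co unfolding coherent_sdos_def Qsets_def by blast
    qed
    finally show ?thesis .
  qed
  thus ?thesis by blast
qed

theorem proposition1:
  fixes K :: "('x \<Rightarrow> real) set set"
  assumes "coherent_sdos K"
  shows "coherent_choice (C_of K)"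
proof -
  note co = assms
  have KC: "K_of (C_of K) = K" by (rule KC_eq[OF co])
  have c1: "is_choice_function (C_of K)"
    unfolding is_choice_function_def C_of_def Qsets_def by auto
  have c0: "\<forall>A \<in> Qsets. A \<noteq> {} \<longrightarrow> C_of K A \<noteq> {}"
    using nonempty_aux[OF co] unfolding Qsets_def C_of_def by auto
  have c2: "\<forall>A \<in> Qsets. \<forall>u \<in> A. u \<in> C_of K A \<longleftrightarrow> 0 \<in> C_of K (minus_set A u)"
  proof (intro ballI)
    fix A :: "'x opt set" and u assume uA: "u \<in> A"
    have "0 \<in> minus_set A u" using uA unfolding minus_set_def by force
    thus "u \<in> C_of K A \<longleftrightarrow> 0 \<in> C_of K (minus_set A u)"
      using uA unfolding C_of_def by (simp add: ms0)
  qed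
  have c3: "\<forall>u \<in> Vpos. {u} \<in> K_of (C_of K)"
  proof
    fix u :: "'x opt" assume u: "u \<in> Vpos"
    have "{u} \<in> Vpos_s" using u unfolding Vpos_s_def by blast
    moreover have "Vpos_s \<subseteq> K" using co unfolding coherent_sdos_def by (elim conjE)
    ultimately show "{u} \<in> K_of (C_of K)" using KC by blast
  qed
  have c4: "\<forall>A \<in> K_of (C_of K). \<forall>B \<in> K_of (C_of K). \<forall>lam.
        (\<forall>p \<in> A \<times> B. lam p \<in> R2plus) \<longrightarrow> comb_set lam A B \<in> K_of (C_of K)"
  proof -
    have "\<forall>A \<in> K. \<forall>B \<in> K. \<forall>lam.
        (\<forall>p \<in> A \<times> B. lam p \<in> R2plus) \<longrightarrow> comb_set lam A B \<in> K"
      using co unfolding coherent_sdos_def by (elim conjE)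
    thus ?thesis unfolding KC .
  qed
  have c5: "\<forall>A \<in> Qsets. \<forall>B \<in> Qsets. A \<subseteq> B \<longrightarrow> rejection (C_of K) A \<subseteq> rejection (C_of K) B"
  proof (intro ballI impI subsetI)
    fix A B u assume A: "A \<in> Qsets" and B: "B \<in> Qsets" and AB: "A \<subseteq> B"
      and u: "u \<in> rejection (C_of K) A"
    have uA: "u \<in> A" and K1: "minus_set A u - {0} \<in> K"
      using u unfolding rejection_def C_of_def by auto
    have "minus_set B u - {0} \<in> K"
      by (rule Kup[OF co K1]) (use B AB in \<open>auto simp: Qsets_def minus_set_def\<close>)
    thus "u \<in> rejection (C_of K) B" using uA AB unfolding rejection_def C_of_def by auto
  qed
  show ?thesis unfolding coherent_choice_def using c0 c1 c2 c3 c4 c5 by (intro conjI)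
qed

end
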